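(* For $j\in\mathbb{Z}_{\ge0}$, \[ B_j(x)=D(x)\Big[\beta_E(j)^2+x\{\beta_E(j+1)^2-q^{-1}(q^{-1}\lambda^2-1)\beta_E(j)^2\}+q^{-1}x^2\{\beta_E(j+1)-q^{-1}\lambda\,\beta_E(j)\}^2\Big], \] where $B_j(x)=\sum_{l\ge0}\beta_E(l+j)^2x^l$ and $D(x)=\{1-(q^{-1}\lambda^2-1)q^{-1}x+(q^{-1}\lambda^2-1)q^{-2}x^2-q^{-3}x^3\}^{-1}$.
   Context: $F$ is a $p$-adic field with odd residue cardinality $q$, uniformizer $\varpi$. $\pi$ is an irreducible unitary unramified representation of $\mathrm{GL}_2(F)$ with trivial central character, a quotient of $\chi\times\chi^{-1}$ with $\chi$ unramified; $\alpha=\chi(\varpi)$, $\lambda=q^{1/2}(\alpha+\alpha^{-1})\in\mathbb{R}$. $\phi$ is the spherical unit vector, $E$ a quadratic étale algebra over $F$, $\alpha_E(\phi_1,\phi_2)=\int_{F^\times\backslash E^\times}\langle\pi(t)\phi_1,\phi_2\rangle d^\times t$ with $\alpha_E(\phi,\phi)\ne0$, and $\beta_E(l)=\alpha_E(\pi(\mathrm{diag}(\varpi^{-l},1))\phi,\phi)/\alpha_E(\phi,\phi)$, satisfying $q\beta_E(l+2)-\lambda\beta_E(l+1)+\beta_E(l)=0$. *)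

theory Defs
  imports "HOL-Computational_Algebra.Formal_Power_Series"
begin

definition B_fps :: "(nat \<Rightarrow> complex) \<Rightarrow> nat \<Rightarrow> complex fps" where
  "B_fps beta j = Abs_fps (\<lambda>l. (beta (l + j))\<^sup>2)"

definition D_fps :: "nat \<Rightarrow> real \<Rightarrow> complex fps" where
  "D_fps q lam = (let Q = complex_of_real (real q); L = complex_of_real lam;
      c = inverse Q * L\<^sup>2 - 1 in
      inverse (1 - fps_const (c * inverse Q) * fps_X
               + fps_const (c * inverse Q ^ 2) * fps_X ^ 2
               - fps_const (inverse Q ^ 3) * fps_X ^ 3))"

end

theory Submission
  imports Defs
begin

unbundle fps_syntax

lemma sq_rec:
  fixes Q L x y :: complex
  assumes "Q \<noteq> 0"
  shows "(((L * ((L*y - x)/Q) - y)/Q))\<^sup>2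
     - inverse Q * (inverse Q * L\<^sup>2 - 1) * ((L*y - x)/Q)\<^sup>2
     + (inverse Q * L\<^sup>2 - 1) * inverse Q ^ 2 * y\<^sup>2 - inverse Q ^ 3 * x\<^sup>2 = 0"
  using assms by (simp add: field_simps power2_eq_square power3_eq_cube)

lemma sq2:
  fixes Q L x y :: complex
  assumes "Q \<noteq> 0"
  shows "((L * y - x) / Q)\<^sup>2 -
        (inverse Q * L\<^sup>2 - 1) * inverse Q * y\<^sup>2 +
        (inverse Q * L\<^sup>2 - 1) * (inverse Q)\<^sup>2 * x\<^sup>2 =
        inverse Q * (y - inverse Q * L * x)\<^sup>2"
  using assms by (simp add: field_simps power2_eq_square power3_eq_cube)

theorem proposition4p3:
  fixes p k q :: nat and lam :: real and beta :: "nat \<Rightarrow> complex" and j :: nat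
  assumes "prime p" and "odd p" and "k \<ge> 1" and "q = p ^ k"
    and rec: "\<And>l. of_nat q * beta (l + 2) - of_real lam * beta (l + 1) + beta l = 0"
  shows "B_fps beta j =
    D_fps q lam *
      (let Q = complex_of_real (real q); L = complex_of_real lam in
        fps_const ((beta j)\<^sup>2)
      + fps_X * fps_const ((beta (j + 1))\<^sup>2 - inverse Q * (inverse Q * L\<^sup>2 - 1) * (beta j)\<^sup>2)
      + fps_const (inverse Q) * fps_X ^ 2 * fps_const ((beta (j + 1) - inverse Q * L * beta j)\<^sup>2))"
proof -
  define Q where "Q = complex_of_real (real q)"
  define L where "L = complex_of_real lam"
  define c where "c = inverse Q * L\<^sup>2 - 1"
  define P where "P = (1 - fps_const (c * inverse Q) * fps_X
               + fps_const (c * inverse Q ^ 2) * fps_X ^ 2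
               - fps_const (inverse Q ^ 3) * fps_X ^ 3 :: complex fps)"
  define b where "b l = beta (l + j)" for l
  have "p > 0" using assms(1) prime_gt_0_nat by blast
  hence "q > 0" using assms(4) by simp
  hence Q0: "Q \<noteq> 0" unfolding Q_def by simp
  have r2: "b (l+2) = (L * b (l+1) - b l) / Q" for l
    using rec[of "l+j"] Q0 unfolding b_def Q_def L_def
    by (simp add: field_simps algebra_simps)
  define N where "N = fps_const ((b 0)\<^sup>2)
      + fps_X * fps_const ((b 1)\<^sup>2 - inverse Q * c * (b 0)\<^sup>2)
      + fps_const (inverse Q) * fps_X ^ 2 * fps_const ((b 1 - inverse Q * L * b 0)\<^sup>2)"
  have B: "B_fps beta j = Abs_fps (\<lambda>l. (b l)\<^sup>2)" unfolding B_fps_def b_def by simp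
  have PB: "P * B_fps beta j = N"
  proof (rule fps_ext)
    fix n
    have e: "P * B_fps beta j = B_fps beta j - fps_const (c * inverse Q) * (fps_X * B_fps beta j)
        + fps_const (c * inverse Q ^ 2) * (fps_X ^ 2 * B_fps beta j)
        - fps_const (inverse Q ^ 3) * (fps_X ^ 3 * B_fps beta j)"
      unfolding P_def by (simp add: algebra_simps)
    show "(P * B_fps beta j) $ n = N $ n"
    proof (cases "n < 3")
      case True
      then consider "n = 0" | "n = 1" | "n = 2" by linarith
      then show ?thesis
      proof cases
        case 1 then show ?thesis unfolding e unfolding N_def B by (simp add: fps_X_power_mult_nth)
      next
        case 2 then show ?thesis unfolding e unfolding N_def B by (simp add: fps_X_power_mult_nth)
      next
        case 3 
        have h: "b 2 = (L * b 1 - b 0) / Q" using r2[of 0] by (simp add: numeral_2_eq_2)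
        from 3 show ?thesis unfolding e unfolding N_def B c_def using Q0
          by (simp add: fps_X_power_mult_nth h) (rule sq2[OF Q0])
      qed
    next
      case False
      then obtain l where n: "n = l + 3" by (metis add.commute le_Suc_ex not_less)
      have h1: "b (l+2) = (L * b (l+1) - b l) / Q" by (rule r2)
      have h2: "b (l+3) = (L * ((L * b (l+1) - b l) / Q) - b (l+1)) / Q"
        using r2[of "l+1"] h1 by (simp add: numeral_3_eq_3 numeral_2_eq_2)
      have "(P * B_fps beta j) $ n = (b (l+3))\<^sup>2 - c * inverse Q * (b (l+2))\<^sup>2
          + c * inverse Q ^ 2 * (b (l+1))\<^sup>2 - inverse Q ^ 3 * (b l)\<^sup>2"
        unfolding e unfolding B n by (simp add: fps_X_power_mult_nth)
      also have "\<dots> = 0" unfolding h1 h2 c_def using sq_rec[OF Q0, of L "b (l+1)" "b l"]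
        by (simp add: algebra_simps)
      finally show ?thesis unfolding N_def n by (simp add: fps_X_power_mult_nth)
    qed
  qed
  have P0: "P $ 0 \<noteq> 0" unfolding P_def by simp
  have "B_fps beta j = inverse P * (P * B_fps beta j)"
    using inverse_mult_eq_1[OF P0] by (simp add: mult.assoc[symmetric])
  also have "\<dots> = inverse P * N" using PB by simp
  finally show ?thesis unfolding D_fps_def P_def N_def Q_def L_def c_def b_def Let_def
    by simp
qed

end
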